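(* Let $n \geq 2$, let $P_n$ be the path with $n$ vertices, and let $B_n$ be the barbell graph consisting of two disjoint cliques of sizes $\lceil n/2\rceil$ and $\lfloor n/2\rfloor$ connected by a single edge. Then $\mathcal{AC}(P_n) = \mathcal{AC}(B_n) = n-2$.
   Context: Acquaintance time: Let $G=(V,E)$ be a finite connected graph. Initially one agent is placed on each vertex. At any moment, two agents located at the endpoints of a common edge become acquainted (in particular, agents on adjacent vertices at the start are acquainted). In each round one chooses a matching of $G$ (not necessarily maximal), and for every edge of the matching the two agents on its endpoints swap places; after each round, all pairs of agents on adjacent vertices become acquainted. A sequence of matchings after which every pair of agents has been acquainted is a strategy for acquaintance in $G$. The acquaintance time $\mathcal{AC}(G)$ is the minimal number of rounds in a strategy for acquaintance in $G$. *)

theory Defs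
  imports Main
begin

text \<open>A graph is given by a finite vertex set V and a symmetric irreflexive
  adjacency relation E. Agents are identified with their initial vertices.
  A matching is encoded as the involution m on V that swaps the two endpoints
  of every matching edge and fixes unmatched vertices.\<close>

definition is_matching_perm :: "'a set \<Rightarrow> ('a \<Rightarrow> 'a \<Rightarrow> bool) \<Rightarrow> ('a \<Rightarrow> 'a) \<Rightarrow> bool" where
  "is_matching_perm V E m \<longleftrightarrow>
     (\<forall>v\<in>V. m v \<in> V \<and> m (m v) = v \<and> (m v = v \<or> E v (m v))) \<and>
     (\<forall>v. v \<notin> V \<longrightarrow> m v = v)"

text \<open>pos ms k v = the agent located at vertex v after k rounds.\<close>
fun pos :: "(nat \<Rightarrow> 'a \<Rightarrow> 'a) \<Rightarrow> nat \<Rightarrow> 'a \<Rightarrow> 'a" where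
  "pos ms 0 = id"
| "pos ms (Suc k) = pos ms k \<circ> ms k"

definition is_acq_strategy :: "'a set \<Rightarrow> ('a \<Rightarrow> 'a \<Rightarrow> bool) \<Rightarrow> (nat \<Rightarrow> 'a \<Rightarrow> 'a) \<Rightarrow> nat \<Rightarrow> bool" where
  "is_acq_strategy V E ms t \<longleftrightarrow>
     (\<forall>k<t. is_matching_perm V E (ms k)) \<and>
     (\<forall>a\<in>V. \<forall>b\<in>V. a \<noteq> b \<longrightarrow>
        (\<exists>k\<le>t. \<exists>u\<in>V. \<exists>v\<in>V. E u v \<and> pos ms k u = a \<and> pos ms k v = b))"

definition acquaintance_time :: "'a set \<Rightarrow> ('a \<Rightarrow> 'a \<Rightarrow> bool) \<Rightarrow> nat" where
  "acquaintance_time V E = (LEAST t. \<exists>ms. is_acq_strategy V E ms t)"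

definition path_adj :: "nat \<Rightarrow> nat \<Rightarrow> nat \<Rightarrow> bool" where
  "path_adj n u v \<longleftrightarrow> u < n \<and> v < n \<and> (u + 1 = v \<or> v + 1 = u)"

definition barbell_adj :: "nat \<Rightarrow> nat \<Rightarrow> nat \<Rightarrow> bool" where
  "barbell_adj n u v \<longleftrightarrow> u < n \<and> v < n \<and> u \<noteq> v \<and>
     (let c = (n + 1) div 2 in
       (u < c \<and> v < c) \<or> (c \<le> u \<and> c \<le> v) \<or>
       (u = c - 1 \<and> v = c) \<or> (u = c \<and> v = c - 1))"

end

theory Submission
  imports Defs
begin


definition sw :: "nat \<Rightarrow> nat \<Rightarrow> nat \<Rightarrow> nat" where
  "sw n k v = (if v < n then (if even (v+k) then (if v+1<n then v+1 else v)
                 else (if 1 \<le> v then v-1 else v)) else v)"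

definition Ppos :: "nat \<Rightarrow> nat \<Rightarrow> nat \<Rightarrow> nat" where
  "Ppos n a k = (if even a then (if a+k \<le> n-1 then a+k else 2*n-1-a-k)
                 else (if k \<le> a then a-k else k-a-1))"

lemma sw_match: "is_matching_perm {0..<n} (path_adj n) (sw n k)"
  unfolding is_matching_perm_def sw_def path_adj_def by auto

lemma Ppos_lt: "a<n \<Longrightarrow> k \<le> n \<Longrightarrow> Ppos n a k < n"
  unfolding Ppos_def by auto

lemma sw_a: "v+1<n \<Longrightarrow> even(v+k) \<Longrightarrow> sw n k v = v+1" by (simp add: sw_def)
lemma sw_b: "v<n \<Longrightarrow> 1\<le>v \<Longrightarrow> odd(v+k) \<Longrightarrow> sw n k v = v-1" by (simp add: sw_def)
lemma sw_c: "v+1=n \<Longrightarrow> even(v+k) \<Longrightarrow> sw n k v = v" by (simp add: sw_def)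
lemma sw_d: "odd k \<Longrightarrow> sw n k 0 = 0" by (simp add: sw_def)

lemma sw_step: assumes an: "a<n" and kn: "k < n" shows "sw n k (Ppos n a (Suc k)) = Ppos n a k"
proof (cases "even a")
  case True
  consider "a+k+1 \<le> n-1" | "a+k = n-1" | "a+k > n-1" by linarith
  then show ?thesis
  proof cases
    case 1
    then have "Ppos n a (Suc k) = (a+k)+1" "Ppos n a k = a+k" using True by (auto simp: Ppos_def)
    moreover have "odd (a+k+1+k)" using True by simp
    ultimately show ?thesis using sw_b[of "a+k+1" n k] 1 an by simp
  next
    case 2
    then have "Ppos n a (Suc k) = n-1" "Ppos n a k = n-1" using True an by (auto simp: Ppos_def)
    moreover have "even (n-1+k)" using True 2 proof -
      have "n-1+k = a + 2*k" using 2 by simp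
      then show ?thesis using True by simp
    qed
    ultimately show ?thesis using sw_c[of "n-1" n k] an by simp
  next
    case 3
    then have "Ppos n a (Suc k) = 2*n-2-a-k" "Ppos n a k = 2*n-2-a-k+1" using True an kn 3 by (auto simp: Ppos_def)
    moreover have "even (2*n-2-a-k+k)" using True 3 an
    proof -
      have "2*n-2-a-k+k = 2*(n-1)-a" using 3 an kn by simp
      moreover have "even (2*(n-1)-a)" using True by (simp add: dvd_diff_nat)
      ultimately show ?thesis by simp
    qed
    moreover have "2*n-2-a-k+1 < n" using 3 an kn by linarith
    ultimately show ?thesis using sw_a[of "2*n-2-a-k" n k] by metis
  qed
next
  case False
  consider "k+1 \<le> a" | "k = a" | "k > a" by linarith
  then show ?thesis
  proof cases
    case 1
    then have "Ppos n a (Suc k) = a-k-1" "Ppos n a k = a-k-1+1" using False by (auto simp: Ppos_def)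
    moreover have "even (a-k-1+k)" using False 1 by simp
    ultimately show ?thesis using sw_a[of "a-k-1" n k] an 1 by simp
  next
    case 2
    then have "Ppos n a (Suc k) = 0" "Ppos n a k = 0" using False by (auto simp: Ppos_def)
    then show ?thesis using sw_d[of k n] False 2 by simp
  next
    case 3
    then have "Ppos n a (Suc k) = k-a" "Ppos n a k = k-a-1" using False by (auto simp: Ppos_def)
    moreover have "odd (k-a+k)" using False 3 by simp
    ultimately show ?thesis using sw_b[of "k-a" n k] kn 3 by simp
  qed
qed

lemma pos_P: "a<n \<Longrightarrow> k \<le> n \<Longrightarrow> pos (sw n) k (Ppos n a k) = a"
proof (induction k)
  case 0
  then show ?case by (auto simp: Ppos_def)
next
  case (Suc k)
  then show ?case using sw_step[of a n k] by simp
qed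

lemma meet_adj: assumes "a+1<b" "b<n" shows "\<exists>k\<le>n-2. path_adj n (Ppos n a k) (Ppos n b k)"
proof (cases "even a")
  case ea: True
  then obtain i where i: "a = 2*i" by (auto elim: evenE)
  show ?thesis
  proof (cases "even b")
    case True
    then obtain j where j: "b = 2*j" by (auto elim: evenE)
    have "Ppos n a (n-1-i-j) = a + (n-1-i-j)" using ea i j assms by (auto simp: Ppos_def)
    moreover have "Ppos n b (n-1-i-j) = a + (n-1-i-j) + 1" using True i j assms by (auto simp: Ppos_def)
    ultimately show ?thesis using assms i j by (intro exI[of _ "n-1-i-j"]) (auto simp: path_adj_def)
  next
    case False
    then obtain j where j: "b = 2*j+1" by (auto elim: oddE)
    have "Ppos n a (j-i) = a + (j-i)" using ea i j assms by (auto simp: Ppos_def)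
    moreover have "Ppos n b (j-i) = a + (j-i) + 1" using False i j assms by (auto simp: Ppos_def)
    ultimately show ?thesis using assms i j by (intro exI[of _ "j-i"]) (auto simp: path_adj_def)
  qed
next
  case oa: False
  then obtain i where i: "a = 2*i+1" by (auto elim: oddE)
  show ?thesis
  proof (cases "even b")
    case True
    then obtain j where j: "b = 2*j" by (auto elim: evenE)
    have "Ppos n a (n-j+i) = (n-j+i) - a - 1" using oa i j assms by (auto simp: Ppos_def)
    moreover have "Ppos n b (n-j+i) = (n-j+i) - a - 1 + 1" using True i j assms by (auto simp: Ppos_def)
    ultimately show ?thesis using assms i j by (intro exI[of _ "n-j+i"]) (auto simp: path_adj_def)
  next
    case False
    then obtain j where j: "b = 2*j+1" by (auto elim: oddE)
    have "Ppos n a (i+j+1) = (i+j+1) - a - 1" using oa i j assms by (auto simp: Ppos_def)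
    moreover have "Ppos n b (i+j+1) = (i+j+1) - a - 1 + 1" using False i j assms by (auto simp: Ppos_def)
    ultimately show ?thesis using assms i j by (intro exI[of _ "i+j+1"]) (auto simp: path_adj_def)
  qed
qed

lemma Ppos0: "a<n \<Longrightarrow> Ppos n a 0 = a" by (auto simp: Ppos_def)

lemma pair_lt: assumes "a<b" "b<n" shows "\<exists>k\<le>n-2. path_adj n (Ppos n a k) (Ppos n b k)"
proof (cases "a+1 = b")
  case True
  then show ?thesis using assms by (intro exI[of _ 0]) (auto simp: Ppos0 path_adj_def)
next
  case False
  then show ?thesis using meet_adj[of a b n] assms by simp
qed

lemma pair: assumes "a<n" "b<n" "a\<noteq>b" shows "\<exists>k\<le>n-2. path_adj n (Ppos n a k) (Ppos n b k)"
proof (cases "a<b")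
  case True
  then show ?thesis using pair_lt assms by blast
next
  case False
  then have "b<a" using assms by simp
  then obtain k where "k\<le>n-2" "path_adj n (Ppos n b k) (Ppos n a k)" using pair_lt assms by blast
  then show ?thesis by (auto simp: path_adj_def)
qed

lemma path_strat: assumes "n \<ge> 2" shows "is_acq_strategy {0..<n} (path_adj n) (sw n) (n-2)"
  unfolding is_acq_strategy_def
proof (intro conjI ballI impI allI)
  show "is_matching_perm {0..<n} (path_adj n) (sw n k)" for k by (rule sw_match)
next
  fix a b assume ab: "a \<in> {0..<n}" "b \<in> {0..<n}" "a \<noteq> b"
  then obtain k where k: "k\<le>n-2" "path_adj n (Ppos n a k) (Ppos n b k)" using pair[of a n b] ab by auto
  have kn: "k \<le> n" using k by simp
  show "\<exists>k\<le>n - 2. \<exists>u\<in>{0..<n}. \<exists>v\<in>{0..<n}. path_adj n u v \<and> pos (sw n) k u = a \<and> pos (sw n) k v = b"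
    apply (rule exI[of _ k])
    using k kn ab Ppos_lt[of a n k] Ppos_lt[of b n k] pos_P[of a n k] pos_P[of b n k]
    by (intro conjI bexI[of _ "Ppos n a k"] bexI[of _ "Ppos n b k"]) auto
qed



lemma matching_bij: "is_matching_perm V E m \<Longrightarrow> bij_betw m V V"
  unfolding is_matching_perm_def by (intro bij_betw_byWitness[where f'=m]) auto

lemma bij_pos: "\<forall>k<t. is_matching_perm V E (ms k) \<Longrightarrow> k \<le> t \<Longrightarrow> bij_betw (pos ms k) V V"
proof (induction k)
  case 0
  then show ?case by (simp add: bij_betw_def)
next
  case (Suc k)
  then have "bij_betw (pos ms k) V V" by simp
  moreover have "bij_betw (ms k) V V" using Suc.prems by (intro matching_bij[of V E]) simp
  ultimately have "bij_betw (pos ms k \<circ> ms k) V V" by (rule bij_betw_trans[rotated])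
  then show ?case by (simp add: comp_def)
qed

lemma mono_strat: "(\<And>u v. E u v \<Longrightarrow> E' u v) \<Longrightarrow> is_acq_strategy V E ms t \<Longrightarrow> is_acq_strategy V E' ms t"
  unfolding is_acq_strategy_def is_matching_perm_def by meson

lemma path_barbell: "path_adj n u v \<Longrightarrow> barbell_adj n u v"
  unfolding path_adj_def barbell_adj_def Let_def by auto

locale LB =
  fixes n :: nat and ms :: "nat \<Rightarrow> nat \<Rightarrow> nat" and t :: nat
  assumes st: "is_acq_strategy {0..<n} (barbell_adj n) ms t"
    and tn: "t + 3 \<le> n"
begin

definition c where "c = (n+1) div 2"

lemma c_props: "1 \<le> c" "c < n" "n \<le> 2*c" "2*c \<le> n+1"
  using tn unfolding c_def by auto

lemma cross: "barbell_adj n u v \<Longrightarrow> u < c \<Longrightarrow> c \<le> v \<Longrightarrow> u = c-1 \<and> v = c"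
  unfolding barbell_adj_def c_def Let_def by auto

lemma cross': "barbell_adj n u v \<Longrightarrow> v < c \<Longrightarrow> c \<le> u \<Longrightarrow> u = c \<and> v = c-1"
  unfolding barbell_adj_def c_def Let_def by auto

lemma match: "k < t \<Longrightarrow> is_matching_perm {0..<n} (barbell_adj n) (ms k)"
  using st unfolding is_acq_strategy_def by auto

lemma bij: "k \<le> t \<Longrightarrow> bij_betw (pos ms k) {0..<n} {0..<n}"
  using bij_pos[of t "{0..<n}" "barbell_adj n" ms k] match by auto

definition onL where "onL k a \<longleftrightarrow> (\<exists>w<c. pos ms k w = a)"
definition onR where "onR k a \<longleftrightarrow> (\<exists>v. c \<le> v \<and> v < n \<and> pos ms k v = a)"

lemma LorR: "k \<le> t \<Longrightarrow> a < n \<Longrightarrow> onL k a \<or> onR k a"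
proof -
  assume "k \<le> t" "a < n"
  then have "a \<in> pos ms k ` {0..<n}" using bij[of k] unfolding bij_betw_def by simp
  then obtain w where "w < n" "pos ms k w = a" by auto
  then show ?thesis unfolding onL_def onR_def by (cases "w < c") (blast, force)
qed

lemma inj_at: "k \<le> t \<Longrightarrow> x < n \<Longrightarrow> y < n \<Longrightarrow> pos ms k x = pos ms k y \<Longrightarrow> x = y"
  using bij unfolding bij_betw_def inj_on_def by auto

lemma notLR: "k \<le> t \<Longrightarrow> onL k a \<Longrightarrow> onR k a \<Longrightarrow> False"
proof -
  assume "k \<le> t" "onL k a" "onR k a"
  then obtain w v where "w<c" "pos ms k w = a" "c \<le> v" "v<n" "pos ms k v = a"
    unfolding onL_def onR_def by auto
  moreover have "w < n" using \<open>w<c\<close> c_props by simp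
  ultimately have "w = v" using inj_at[of k w v] \<open>k\<le>t\<close> by simp
  then show False using \<open>w<c\<close> \<open>c\<le>v\<close> by simp
qed

lemma LR: assumes "k < t" "onL k a" "onR (Suc k) a"
  shows "pos ms k (c-1) = a \<and> ms k (c-1) = c \<and> ms k c = c-1"
proof -
  obtain w where w: "w<c" "pos ms k w = a" using assms unfolding onL_def by auto
  obtain v where v: "c \<le> v" "v < n" "pos ms k (ms k v) = a" using assms unfolding onR_def by auto
  have m: "is_matching_perm {0..<n} (barbell_adj n) (ms k)" using match assms by simp
  then have mv: "ms k v < n" "ms k (ms k v) = v" "ms k v = v \<or> barbell_adj n v (ms k v)"
    using v unfolding is_matching_perm_def by auto
  have "ms k v = w" using inj_at[of k "ms k v" w] mv w v c_props assms by auto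
  then have "ms k v \<noteq> v" using w v by auto
  then have "barbell_adj n v (ms k v)" using mv by auto
  then have "v = c \<and> ms k v = c - 1" using cross'[of v "ms k v"] \<open>ms k v = w\<close> w v by auto
  then show ?thesis using w mv \<open>ms k v = w\<close> by auto
qed

lemma RL: assumes "k < t" "onR k b" "onL (Suc k) b"
  shows "pos ms k c = b \<and> ms k c = c-1 \<and> ms k (c-1) = c"
proof -
  obtain v where v: "c \<le> v" "v<n" "pos ms k v = b" using assms unfolding onR_def by auto
  obtain w where w: "w < c" "pos ms k (ms k w) = b" using assms unfolding onL_def by auto
  have m: "is_matching_perm {0..<n} (barbell_adj n) (ms k)" using match assms by simp
  have wn: "w < n" using w c_props by simp
  then have mw: "ms k w < n" "ms k (ms k w) = w" "ms k w = w \<or> barbell_adj n w (ms k w)"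
    using m unfolding is_matching_perm_def by auto
  have "ms k w = v" using inj_at[of k "ms k w" v] mw w v assms by auto
  then have "ms k w \<noteq> w" using w v by auto
  then have "barbell_adj n w (ms k w)" using mw by auto
  then have "w = c - 1 \<and> ms k w = c" using cross[of w "ms k w"] \<open>ms k w = v\<close> w v by auto
  then show ?thesis using v mw \<open>ms k w = v\<close> by auto
qed


definition A where "A = {a. a < c \<and> (\<exists>k\<le>t. onR k a)}"
definition B where "B = {b. c \<le> b \<and> b < n \<and> (\<exists>k\<le>t. onL k b)}"
definition ka where "ka a = (LEAST k. onR k a)"
definition kb where "kb b = (LEAST k. onL k b)"
definition PP where "PP = {0..<c} - A"
definition QQ where "QQ = {c..<n} - B"
definition T3 where "T3 = {k. k \<le> t \<and> pos ms k (c-1) \<in> PP \<and> pos ms k c \<in> QQ}"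

lemma ka_props: assumes "a \<in> A"
  shows "1 \<le> ka a" "ka a \<le> t" "pos ms (ka a - 1) (c-1) = a" "pos ms (ka a) c = a"
    "pos ms (ka a) (c-1) = pos ms (ka a - 1) c" "\<And>j. j < ka a \<Longrightarrow> \<not> onR j a"
proof -
  obtain k where k: "k \<le> t" "onR k a" and ac: "a < c" using assms unfolding A_def by auto
  have r: "onR (ka a) a" unfolding ka_def using k(2) by (rule LeastI)
  show kt: "ka a \<le> t" unfolding ka_def using k Least_le[of "\<lambda>k. onR k a" k] by simp
  show nr: "\<And>j. j < ka a \<Longrightarrow> \<not> onR j a" unfolding ka_def by (rule not_less_Least)
  have n0: "\<not> onR 0 a" using ac unfolding onR_def by auto
  have "ka a \<noteq> 0"
  proof
    assume h: "ka a = 0"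
    show False using r n0 unfolding h by simp
  qed
  then show "1 \<le> ka a" by simp
  define j where "j = ka a - 1"
  have sj: "Suc j = ka a" using \<open>ka a \<noteq> 0\<close> j_def by simp
  have "onL j a" using LorR[of j a] nr[of j] sj kt ac c_props by auto
  then have lr: "pos ms j (c-1) = a \<and> ms j (c-1) = c \<and> ms j c = c-1"
    using LR[of j a] r sj kt by auto
  then show "pos ms (ka a - 1) (c-1) = a" using j_def by simp
  show "pos ms (ka a) c = a" using lr sj[symmetric] by simp
  show "pos ms (ka a) (c-1) = pos ms (ka a - 1) c" using lr sj[symmetric] by simp
qed

lemma kb_props: assumes "b \<in> B"
  shows "1 \<le> kb b" "kb b \<le> t" "pos ms (kb b - 1) c = b" "pos ms (kb b) (c-1) = b"
    "pos ms (kb b) c = pos ms (kb b - 1) (c-1)" "\<And>j. j < kb b \<Longrightarrow> \<not> onL j b"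
proof -
  obtain k where k: "k \<le> t" "onL k b" and bc: "c \<le> b" "b < n" using assms unfolding B_def by auto
  have r: "onL (kb b) b" unfolding kb_def using k(2) by (rule LeastI)
  show kt: "kb b \<le> t" unfolding kb_def using k Least_le[of "\<lambda>k. onL k b" k] by simp
  show nr: "\<And>j. j < kb b \<Longrightarrow> \<not> onL j b" unfolding kb_def by (rule not_less_Least)
  have n0: "\<not> onL 0 b" using bc unfolding onL_def by auto
  have "kb b \<noteq> 0"
  proof
    assume h: "kb b = 0"
    show False using r n0 unfolding h by simp
  qed
  then show "1 \<le> kb b" by simp
  define j where "j = kb b - 1"
  have sj: "Suc j = kb b" using \<open>kb b \<noteq> 0\<close> j_def by simp
  have "onR j b" using LorR[of j b] nr[of j] sj kt bc by auto
  then have lr: "pos ms j c = b \<and> ms j c = c-1 \<and> ms j (c-1) = c"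
    using RL[of j b] r sj kt by auto
  then show "pos ms (kb b - 1) c = b" using j_def by simp
  show "pos ms (kb b) (c-1) = b" using lr sj[symmetric] by simp
  show "pos ms (kb b) c = pos ms (kb b - 1) (c-1)" using lr sj[symmetric] by simp
qed

lemma card3: "X \<subseteq> {0..t} \<Longrightarrow> Y \<subseteq> {0..t} \<Longrightarrow> Z \<subseteq> {0..t} \<Longrightarrow> X \<inter> Y = {} \<Longrightarrow> X \<inter> Z = {}
   \<Longrightarrow> Y \<inter> Z = {} \<Longrightarrow> card X + card Y + card Z \<le> t + 1"
proof -
  assume h: "X \<subseteq> {0..t}" "Y \<subseteq> {0..t}" "Z \<subseteq> {0..t}" "X \<inter> Y = {}" "X \<inter> Z = {}" "Y \<inter> Z = {}"
  have f: "finite X" "finite Y" "finite Z" using h finite_subset by blast+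
  have "card (X \<union> Y \<union> Z) = card X + card Y + card Z"
    using f h by (simp add: card_Un_disjoint Int_Un_distrib2)
  moreover have "card (X \<union> Y \<union> Z) \<le> card {0..t}" using h by (intro card_mono) auto
  ultimately show ?thesis by simp
qed

lemma T3_big: "card (PP \<times> QQ) \<le> card T3"
proof -
  have "PP \<times> QQ \<subseteq> (\<lambda>k. (pos ms k (c-1), pos ms k c)) ` T3"
  proof
    fix z assume "z \<in> PP \<times> QQ"
    then obtain x y where z: "z = (x,y)" "x \<in> PP" "y \<in> QQ" by auto
    then have xy: "x < c" "c \<le> y" "y < n" "x \<notin> A" "y \<notin> B" unfolding PP_def QQ_def by auto
    have "\<forall>a\<in>{0..<n}. \<forall>b\<in>{0..<n}. a \<noteq> b \<longrightarrow>
        (\<exists>k\<le>t. \<exists>u\<in>{0..<n}. \<exists>v\<in>{0..<n}. barbell_adj n u v \<and> pos ms k u = a \<and> pos ms k v = b)"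
      using st unfolding is_acq_strategy_def by blast
    moreover have "x \<in> {0..<n}" "y \<in> {0..<n}" "x \<noteq> y" using xy c_props by auto
    ultimately obtain k u v where kuv: "k \<le> t" "u < n" "v < n" "barbell_adj n u v" "pos ms k u = x" "pos ms k v = y"
      by fastforce
    have "u < c"
    proof (rule ccontr)
      assume "\<not> u < c"
      then have "onR k x" using kuv unfolding onR_def by (intro exI[of _ u]) auto
      then show False using xy kuv unfolding A_def by auto
    qed
    have "c \<le> v"
    proof (rule ccontr)
      assume "\<not> c \<le> v"
      then have "onL k y" using kuv unfolding onL_def by (intro exI[of _ v]) auto
      then show False using xy kuv unfolding B_def by auto
    qed
    then have "u = c-1 \<and> v = c" using cross kuv \<open>u<c\<close> by auto
    then show "z \<in> (\<lambda>k. (pos ms k (c-1), pos ms k c)) ` T3"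
      using kuv z unfolding T3_def by auto
  qed
  moreover have "finite T3" by (rule finite_subset[of T3 "{0..t}"]) (auto simp: T3_def)
  ultimately show ?thesis by (meson card_image_le card_mono finite_imageI order_trans)
qed

lemma countA: "2 * card A + card (PP \<times> QQ) \<le> t + 1"
proof -
  let ?T1 = "(\<lambda>a. ka a - 1) ` A" and ?T2 = "ka ` A"
  have i1: "inj_on (\<lambda>a. ka a - 1) A"
  proof (rule inj_onI)
    fix a a' assume "a \<in> A" "a' \<in> A" "ka a - 1 = ka a' - 1"
    then show "a = a'" using ka_props(3)[of a] ka_props(3)[of a'] by simp
  qed
  have i2: "inj_on ka A"
  proof (rule inj_onI)
    fix a a' assume "a \<in> A" "a' \<in> A" "ka a = ka a'"
    then show "a = a'" using ka_props(3)[of a] ka_props(3)[of a'] by simp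
  qed
  have d12: "?T1 \<inter> ?T2 = {}"
  proof (rule ccontr)
    assume "?T1 \<inter> ?T2 \<noteq> {}"
    then obtain a a' where aa: "a \<in> A" "a' \<in> A" "ka a - 1 = ka a'" by auto
    have "pos ms (ka a' - 1) c = a" using ka_props(5)[OF aa(2)] ka_props(3)[OF aa(1)] aa(3) by simp
    then have "onR (ka a' - 1) a" unfolding onR_def using c_props by auto
    moreover have "ka a' - 1 < ka a" using aa ka_props(1)[OF aa(1)] ka_props(1)[OF aa(2)] by simp
    ultimately show False using ka_props(6)[OF aa(1)] by blast
  qed
  have d13: "?T1 \<inter> T3 = {}"
  proof (rule equals0I)
    fix k assume "k \<in> ?T1 \<inter> T3"
    then obtain a where "a \<in> A" "k = ka a - 1" "pos ms k (c-1) \<in> PP" unfolding T3_def by auto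
    then show False using ka_props(3)[of a] unfolding PP_def by auto
  qed
  have d23: "?T2 \<inter> T3 = {}"
  proof (rule equals0I)
    fix k assume "k \<in> ?T2 \<inter> T3"
    then obtain a where "a \<in> A" "k = ka a" "pos ms k c \<in> QQ" unfolding T3_def by auto
    then show False using ka_props(4)[of a] unfolding QQ_def A_def by auto
  qed
  have s: "?T1 \<subseteq> {0..t}" "?T2 \<subseteq> {0..t}" "T3 \<subseteq> {0..t}" using ka_props(2) unfolding T3_def by force+
  have "card ?T1 + card ?T2 + card T3 \<le> t + 1" using card3[OF s d12 d13 d23] .
  then show ?thesis using card_image[OF i1] card_image[OF i2] T3_big by simp
qed

lemma countB: "2 * card B + card (PP \<times> QQ) \<le> t + 1"
proof -
  let ?T1 = "(\<lambda>b. kb b - 1) ` B" and ?T2 = "kb ` B"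
  have i1: "inj_on (\<lambda>b. kb b - 1) B"
  proof (rule inj_onI)
    fix b b' assume "b \<in> B" "b' \<in> B" "kb b - 1 = kb b' - 1"
    then show "b = b'" using kb_props(3)[of b] kb_props(3)[of b'] by simp
  qed
  have i2: "inj_on kb B"
  proof (rule inj_onI)
    fix b b' assume "b \<in> B" "b' \<in> B" "kb b = kb b'"
    then show "b = b'" using kb_props(3)[of b] kb_props(3)[of b'] by simp
  qed
  have d12: "?T1 \<inter> ?T2 = {}"
  proof (rule ccontr)
    assume "?T1 \<inter> ?T2 \<noteq> {}"
    then obtain b b' where bb: "b \<in> B" "b' \<in> B" "kb b - 1 = kb b'" by auto
    have "pos ms (kb b' - 1) (c-1) = b" using kb_props(5)[OF bb(2)] kb_props(3)[OF bb(1)] bb(3) by simp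
    then have "onL (kb b' - 1) b" unfolding onL_def using c_props
      by (metis diff_less zero_less_one order_less_le_trans)
    moreover have "kb b' - 1 < kb b" using bb kb_props(1)[OF bb(1)] kb_props(1)[OF bb(2)] by simp
    ultimately show False using kb_props(6)[OF bb(1)] by blast
  qed
  have d13: "?T1 \<inter> T3 = {}"
  proof (rule equals0I)
    fix k assume "k \<in> ?T1 \<inter> T3"
    then obtain b where "b \<in> B" "k = kb b - 1" "pos ms k c \<in> QQ" unfolding T3_def by auto
    then show False using kb_props(3)[of b] unfolding QQ_def by auto
  qed
  have d23: "?T2 \<inter> T3 = {}"
  proof (rule equals0I)
    fix k assume "k \<in> ?T2 \<inter> T3"
    then obtain b where "b \<in> B" "k = kb b" "pos ms k (c-1) \<in> PP" unfolding T3_def by auto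
    then show False using kb_props(4)[of b] unfolding PP_def B_def by auto
  qed
  have s: "?T1 \<subseteq> {0..t}" "?T2 \<subseteq> {0..t}" "T3 \<subseteq> {0..t}" using kb_props(2) unfolding T3_def by force+
  have "card ?T1 + card ?T2 + card T3 \<le> t + 1" using card3[OF s d12 d13 d23] .
  then show ?thesis using card_image[OF i1] card_image[OF i2] T3_big by simp
qed


end

lemma arith_final:
  fixes al be c n t pp qq :: nat
  assumes "2*al + pp*qq \<le> t+1" "2*be + pp*qq \<le> t+1" "t+3 \<le> n" "n \<le> 2*c" "2*c \<le> n+1"
    "pp + al = c" "qq + be + c = n"
  shows False
proof (cases "pp = 0 \<or> qq = 0")
  case True
  then show ?thesis using assms by auto
next
  case False
  then obtain x y where "pp = Suc x" "qq = Suc y" by (meson not0_implies_Suc)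
  then have "pp + qq \<le> pp*qq + 1" by simp
  then show ?thesis using assms by linarith
qed

lemma lower: assumes "is_acq_strategy {0..<n} (barbell_adj n) ms t" "t + 3 \<le> n" shows False
proof -
  interpret LB n ms t using assms by unfold_locales
  have sA: "A \<subseteq> {0..<c}" unfolding A_def by auto
  have sB: "B \<subseteq> {c..<n}" unfolding B_def by auto
  have cP: "card PP + card A = c" unfolding PP_def using sA
    by (metis card_Diff_subset card_atLeastLessThan diff_zero finite_atLeastLessThan finite_subset le_add_diff_inverse2 card_mono)
  have cQ: "card QQ + card B + c = n" unfolding QQ_def using sB c_props
    by (metis card_Diff_subset card_atLeastLessThan finite_atLeastLessThan finite_subset le_add_diff_inverse2 card_mono less_imp_le_nat add.commute le_add_diff_inverse)
  have "card (PP \<times> QQ) = card PP * card QQ" by (rule card_cartesian_product)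
  then show False using arith_final[OF _ _ assms(2) c_props(3) c_props(4) cP cQ] countA countB by simp
qed


theorem theorem3p1:
  fixes n :: nat
  assumes "n \<ge> 2"
  shows "acquaintance_time {0..<n} (path_adj n) = n - 2
       \<and> acquaintance_time {0..<n} (barbell_adj n) = n - 2"
proof -
  have ps: "is_acq_strategy {0..<n} (path_adj n) (sw n) (n-2)" using path_strat assms .
  have bs: "is_acq_strategy {0..<n} (barbell_adj n) (sw n) (n-2)"
    using mono_strat[of "path_adj n" "barbell_adj n", OF path_barbell ps] .
  have lb: "n - 2 \<le> t" if "is_acq_strategy {0..<n} (barbell_adj n) ms t" for ms t
  proof (rule ccontr)
    assume "\<not> n - 2 \<le> t"
    then have "t + 3 \<le> n" by simp
    then show False using lower that by blast
  qed
  have lp: "n - 2 \<le> t" if "is_acq_strategy {0..<n} (path_adj n) ms t" for ms t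
    using lb mono_strat[of "path_adj n" "barbell_adj n", OF path_barbell that] by blast
  have "acquaintance_time {0..<n} (path_adj n) = n - 2"
    unfolding acquaintance_time_def
    by (rule Least_equality) (use ps lp in blast)+
  moreover have "acquaintance_time {0..<n} (barbell_adj n) = n - 2"
    unfolding acquaintance_time_def
    by (rule Least_equality) (use bs lb in blast)+
  ultimately show ?thesis ..
qed

end
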